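(* Assume $\mathbb{E}[V(yZ_T^0)]<\infty$ for every $y>0$. Then: (1) for every $y>0$, $v(y):=\mathbb{E}[V(yZ_T^0)]=\sup_{x>0}\{u(x,U)-xy\}$; (2) the function $x\mapsto u(x,U_c)$ coincides on $(0,\infty)$ with the concave envelope of the function $x\mapsto u(x,U)$.
   Context: Fix $T>0$ and a filtered probability space $(\Omega,\mathcal F,(\mathcal F_t)_{0\le t\le T},\mathbf P)$ satisfying the usual conditions. Fix $0<\lambda<1$ and a strictly positive càdlàg adapted stock price $S$. A $\lambda$-consistent price system is a strictly positive process $Z=(Z^0,Z^1)$ with $Z^0_0=1$, $Z^0$ a $\mathbf P$-martingale, $Z^1$ a $\mathbf P$-local martingale, and $Z^1_t/Z^0_t\in[(1-\lambda)S_t,S_t]$ a.s. for all $t$. Standing assumption: one such $Z$ is fixed. Following the paper, $\mathcal C(x)=\{f\in L^0_+(\mathbf P):\mathbb{E}[Z_T^0 f]\le x\}$ for $x>0$. A utility is a function $U:(0,\infty)\to\mathbb R$ that is non-constant, increasing, upper semicontinuous, with $U(\infty):=\lim_{x\to\infty}U(x)>0$ and $\lim_{x\to\infty}U(x)/x=0$; $U$ need not be concave. $U$ is extended by $-\infty$ on $(-\infty,0)$ and $U(0):=\lim_{x\downarrow0}U(x)$. For $f\ge0$, $\mathbb{E}[U(f)]:=-\infty$ if $U^-(f)\notin L^1$. For a utility-type function $W$ (here $W=U$ or $W=U_c$), $u(x,W):=\sup\{\mathbb{E}[W(f)]:f\in\mathcal C(x)\}$. The concave envelope $U_c$ of $U$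 is the smallest concave function $\mathbb R\to\mathbb R\cup\{-\infty\}$ with $U_c\ge U$; the concave envelope of a function $g$ on $(0,\infty)$ is likewise the smallest concave function dominating $g$. The convex conjugate of $U$ is $V(y):=\sup_{x>0}\{U(x)-xy\}$, $y>0$. *)

theory Defs
  imports "HOL-Probability.Probability"
begin

(* F t is the sigma-algebra F_t, as a sub-measure-space of M (same space, subset of sets) *)
definition filtration :: "'a measure \<Rightarrow> real \<Rightarrow> (real \<Rightarrow> 'a measure) \<Rightarrow> bool" where
  "filtration M T F \<longleftrightarrow>
     (\<forall>t\<in>{0..T}. subalgebra M (F t)) \<and>
     (\<forall>s\<in>{0..T}. \<forall>t\<in>{0..T}. s \<le> t \<longrightarrow> sets (F s) \<subseteq> sets (F t))"

definition usual_conditions :: "'a measure \<Rightarrow> real \<Rightarrow> (real \<Rightarrow> 'a measure) \<Rightarrow> bool" where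
  "usual_conditions M T F \<longleftrightarrow>
     (\<forall>N\<in>null_sets M. \<forall>A. A \<subseteq> N \<longrightarrow> A \<in> sets (F 0)) \<and>
     (\<forall>t\<in>{0..<T}. sets (F t) = (\<Inter>s\<in>{t<..T}. sets (F s)))"

definition adapted :: "real \<Rightarrow> (real \<Rightarrow> 'a measure) \<Rightarrow> (real \<Rightarrow> 'a \<Rightarrow> real) \<Rightarrow> bool" where
  "adapted T F X \<longleftrightarrow> (\<forall>t\<in>{0..T}. X t \<in> borel_measurable (F t))"

definition cadlag :: "'a measure \<Rightarrow> real \<Rightarrow> (real \<Rightarrow> 'a \<Rightarrow> real) \<Rightarrow> bool" where
  "cadlag M T X \<longleftrightarrow> (\<forall>\<omega>\<in>space M.
      (\<forall>t\<in>{0..<T}. ((\<lambda>s. X s \<omega>) \<longlongrightarrow> X t \<omega>) (at_right t)) \<and>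
      (\<forall>t\<in>{0<..T}. \<exists>l. ((\<lambda>s. X s \<omega>) \<longlongrightarrow> l) (at_left t)))"

definition martingale :: "'a measure \<Rightarrow> real \<Rightarrow> (real \<Rightarrow> 'a measure) \<Rightarrow> (real \<Rightarrow> 'a \<Rightarrow> real) \<Rightarrow> bool" where
  "martingale M T F X \<longleftrightarrow> adapted T F X \<and> (\<forall>t\<in>{0..T}. integrable M (X t)) \<and>
     (\<forall>s\<in>{0..T}. \<forall>t\<in>{0..T}. s \<le> t \<longrightarrow>
        (AE \<omega> in M. real_cond_exp M (F s) (X t) \<omega> = X s \<omega>))"

definition stopping_time :: "'a measure \<Rightarrow> real \<Rightarrow> (real \<Rightarrow> 'a measure) \<Rightarrow> ('a \<Rightarrow> real) \<Rightarrow> bool" where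
  "stopping_time M T F \<tau> \<longleftrightarrow> (\<forall>\<omega>\<in>space M. \<tau> \<omega> \<in> {0..T}) \<and>
     (\<forall>t\<in>{0..T}. {\<omega>\<in>space M. \<tau> \<omega> \<le> t} \<in> sets (F t))"

definition local_martingale :: "'a measure \<Rightarrow> real \<Rightarrow> (real \<Rightarrow> 'a measure) \<Rightarrow> (real \<Rightarrow> 'a \<Rightarrow> real) \<Rightarrow> bool" where
  "local_martingale M T F X \<longleftrightarrow> adapted T F X \<and>
     (\<exists>\<tau> :: nat \<Rightarrow> 'a \<Rightarrow> real.
        (\<forall>n. stopping_time M T F (\<tau> n)) \<and>
        (\<forall>n. \<forall>\<omega>\<in>space M. \<tau> n \<omega> \<le> \<tau> (Suc n) \<omega>) \<and>
        (AE \<omega> in M. \<exists>n. \<tau> n \<omega> = T) \<and>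
        (\<forall>n. martingale M T F (\<lambda>t \<omega>. X (min t (\<tau> n \<omega>)) \<omega>)))"

definition consistent_price_system ::
  "'a measure \<Rightarrow> real \<Rightarrow> (real \<Rightarrow> 'a measure) \<Rightarrow> real \<Rightarrow> (real \<Rightarrow> 'a \<Rightarrow> real)
     \<Rightarrow> (real \<Rightarrow> 'a \<Rightarrow> real) \<Rightarrow> (real \<Rightarrow> 'a \<Rightarrow> real) \<Rightarrow> bool" where
  "consistent_price_system M T F lam S Z0 Z1 \<longleftrightarrow>
     (\<forall>t\<in>{0..T}. \<forall>\<omega>\<in>space M. Z0 t \<omega> > 0 \<and> Z1 t \<omega> > 0) \<and>
     (\<forall>\<omega>\<in>space M. Z0 0 \<omega> = 1) \<and>
     martingale M T F Z0 \<and> local_martingale M T F Z1 \<and>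
     (\<forall>t\<in>{0..T}. AE \<omega> in M. Z1 t \<omega> / Z0 t \<omega> \<in> {(1 - lam) * S t \<omega> .. S t \<omega>})"

definition upper_semicontinuous_on :: "real set \<Rightarrow> (real \<Rightarrow> real) \<Rightarrow> bool" where
  "upper_semicontinuous_on A f \<longleftrightarrow>
     (\<forall>x\<in>A. \<forall>c. f x < c \<longrightarrow> eventually (\<lambda>y. f y < c) (at x within A))"

definition utility :: "(real \<Rightarrow> real) \<Rightarrow> bool" where
  "utility U \<longleftrightarrow>
     (\<exists>x\<in>{0<..}. \<exists>y\<in>{0<..}. U x \<noteq> U y) \<and>
     mono_on {0<..} U \<and>
     upper_semicontinuous_on {0<..} U \<and>
     (\<exists>L::ereal. ((\<lambda>x. ereal (U x)) \<longlongrightarrow> L) at_top \<and> L > 0) \<and>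
     ((\<lambda>x. U x / x) \<longlongrightarrow> 0) at_top"

definition U_ext :: "(real \<Rightarrow> real) \<Rightarrow> real \<Rightarrow> ereal" where
  "U_ext U x = (if x > 0 then ereal (U x)
                else if x = 0 then Lim (at_right 0) (\<lambda>z. ereal (U z))
                else -\<infinity>)"

definition ereal_expectation :: "'a measure \<Rightarrow> ('a \<Rightarrow> ereal) \<Rightarrow> ereal" where
  "ereal_expectation M g =
     (if (\<integral>\<^sup>+ \<omega>. e2ennreal (max 0 (- g \<omega>)) \<partial>M) = \<infinity> then -\<infinity>
      else enn2ereal (\<integral>\<^sup>+ \<omega>. e2ennreal (max 0 (g \<omega>)) \<partial>M)
         - enn2ereal (\<integral>\<^sup>+ \<omega>. e2ennreal (max 0 (- g \<omega>)) \<partial>M))"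

definition concave_ereal_on :: "real set \<Rightarrow> (real \<Rightarrow> ereal) \<Rightarrow> bool" where
  "concave_ereal_on A h \<longleftrightarrow> convex {(x, r::real). x \<in> A \<and> ereal r \<le> h x}"

definition concave_envelope_on :: "real set \<Rightarrow> (real \<Rightarrow> ereal) \<Rightarrow> real \<Rightarrow> ereal" where
  "concave_envelope_on A g x =
     (INF h \<in> {h. concave_ereal_on A h \<and> (\<forall>z\<in>A. g z \<le> h z)}. h x)"

definition U_c :: "(real \<Rightarrow> real) \<Rightarrow> real \<Rightarrow> ereal" where
  "U_c U x = (INF h \<in> {h. concave_ereal_on UNIV h \<and> (\<forall>z. h z \<noteq> \<infinity>) \<and> (\<forall>z. U_ext U z \<le> h z)}. h x)"

definition conj_V :: "(real \<Rightarrow> real) \<Rightarrow> real \<Rightarrow> ereal" where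
  "conj_V U y = (SUP x \<in> {0<..}. ereal (U x - x * y))"

definition budget_set :: "'a measure \<Rightarrow> ('a \<Rightarrow> real) \<Rightarrow> real \<Rightarrow> ('a \<Rightarrow> real) set" where
  "budget_set M ZT x = {f. f \<in> borel_measurable M \<and> (\<forall>\<omega>\<in>space M. f \<omega> \<ge> 0) \<and>
      (\<integral>\<^sup>+ \<omega>. ennreal (ZT \<omega> * f \<omega>) \<partial>M) \<le> ennreal x}"

definition value_fun :: "'a measure \<Rightarrow> ('a \<Rightarrow> real) \<Rightarrow> (real \<Rightarrow> ereal) \<Rightarrow> real \<Rightarrow> ereal" where
  "value_fun M ZT W x = (SUP f \<in> budget_set M ZT x. ereal_expectation M (\<lambda>\<omega>. W (f \<omega>)))"

end

theory Submission
  imports Defs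
begin

lemma e2_pos: "e2ennreal (max 0 (ereal r)) = ennreal r"
proof (cases "0 \<le> r")
  case True
  then have "max 0 (ereal r) = ereal r" by (simp add: max_def)
  then show ?thesis using True by (metis e2ennreal_enn2ereal enn2ereal_ennreal)
next
  case False
  then have "max 0 (ereal r) = 0" by (simp add: max_def)
  then show ?thesis using False by (simp add: ennreal_neg)
qed

lemma e2_neg: "e2ennreal (max 0 (- ereal r)) = ennreal (- r)"
  using e2_pos[of "-r"] by simp

lemma enn2ereal_fin: "A \<noteq> \<top> \<Longrightarrow> enn2ereal A = ereal (enn2real A)"
  by (metis enn2ereal_ennreal enn2real_nonneg ennreal_enn2real_if)

lemma E_real:
  assumes "integrable M h"
  shows "ereal_expectation M (\<lambda>\<omega>. ereal (h \<omega>)) = ereal (integral\<^sup>L M h)"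
proof -
  have a: "(\<integral>\<^sup>+ x. ennreal (h x) \<partial>M) \<noteq> \<infinity>" "(\<integral>\<^sup>+ x. ennreal (- h x) \<partial>M) \<noteq> \<infinity>"
    using assms unfolding real_integrable_def by auto
  show ?thesis
    unfolding ereal_expectation_def e2_pos e2_neg real_lebesgue_integral_def[OF assms]
    using a by (simp add: enn2ereal_fin)
qed

lemma minus_aux:
  fixes pA pB nA nB :: ennreal
  assumes "pA \<le> pB" "nB \<le> nA"
  shows "enn2ereal pA - enn2ereal nA \<le> enn2ereal pB - enn2ereal nB"
  by (metis assms(2) assms(1) ereal_minus_mono less_eq_ennreal.rep_eq)

lemma E_mono:
  assumes "\<And>\<omega>. \<omega> \<in> space M \<Longrightarrow> A \<omega> \<le> B \<omega>"
  shows "ereal_expectation M A \<le> ereal_expectation M B"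
proof -
  let ?pA = "\<integral>\<^sup>+ \<omega>. e2ennreal (max 0 (A \<omega>)) \<partial>M"
  let ?nA = "\<integral>\<^sup>+ \<omega>. e2ennreal (max 0 (- A \<omega>)) \<partial>M"
  let ?pB = "\<integral>\<^sup>+ \<omega>. e2ennreal (max 0 (B \<omega>)) \<partial>M"
  let ?nB = "\<integral>\<^sup>+ \<omega>. e2ennreal (max 0 (- B \<omega>)) \<partial>M"
  have p: "?pA \<le> ?pB"
    by (intro nn_integral_mono e2ennreal_mono max.mono) (use assms in auto)
  have n: "?nB \<le> ?nA"
    by (intro nn_integral_mono e2ennreal_mono max.mono) (use assms in auto)
  show ?thesis
  proof (cases "?nA = \<infinity>")
    case True then show ?thesis unfolding ereal_expectation_def by simp
  next
    case False
    then have nB: "?nB \<noteq> \<infinity>" using n by (metis infinity_ennreal_def top.extremum_uniqueI)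
    have "enn2ereal ?pA - enn2ereal ?nA \<le> enn2ereal ?pB - enn2ereal ?nB"
      using p n by (rule minus_aux)
    then show ?thesis unfolding ereal_expectation_def using False nB by simp
  qed
qed

lemma e2_inf: "e2ennreal (max 0 \<infinity>) = \<top>" "e2ennreal (max 0 (-\<infinity>)) = 0"
  by (simp_all add: e2ennreal_infty)

lemma key_pt:
  fixes a b :: ereal
  assumes "a \<noteq> -\<infinity>" "b \<noteq> -\<infinity>"
  shows "e2ennreal (max 0 (a+b)) + e2ennreal (max 0 (-a)) + e2ennreal (max 0 (-b)) =
         e2ennreal (max 0 (-(a+b))) + e2ennreal (max 0 a) + e2ennreal (max 0 b)"
proof (cases "a = \<infinity> \<or> b = \<infinity>")
  case True
  then have "a + b = \<infinity>" using assms by auto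
  then show ?thesis using True by (auto simp: e2_inf)
next
  case False
  then obtain x y where [simp]: "a = ereal x" "b = ereal y" using assms
    by (cases a; cases b) auto
  have E: "ennreal (x+y) + ennreal (-x) + ennreal (-y) = ennreal (-(x+y)) + ennreal x + ennreal y"
  proof -
    have r: "max 0 (x+y) + max 0 (-x) + max 0 (-y) = max 0 (-(x+y)) + max 0 x + max 0 y"
      by (simp add: max_def)
    have "ennreal (x+y) + ennreal (-x) + ennreal (-y) = ennreal (max 0 (x+y) + max 0 (-x) + max 0 (-y))"
      by simp
    also have "\<dots> = ennreal (max 0 (-(x+y)) + max 0 x + max 0 y)" using r by simp
    also have "\<dots> = ennreal (-(x+y)) + ennreal x + ennreal y"
      by simp
    finally show ?thesis .
  qed
  have ab: "a + b = ereal (x+y)" by simp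
  have e1: "e2ennreal (max 0 (a+b)) = ennreal (x+y)" unfolding ab by (rule e2_pos)
  have e2: "e2ennreal (max 0 (-(a+b))) = ennreal (-(x+y))" unfolding ab by (rule e2_neg)
  have e3: "e2ennreal (max 0 a) = ennreal x" by (simp only: \<open>a = ereal x\<close> e2_pos)
  have e4: "e2ennreal (max 0 b) = ennreal y" by (simp only: \<open>b = ereal y\<close> e2_pos)
  have e5: "e2ennreal (max 0 (-a)) = ennreal (-x)" by (simp only: \<open>a = ereal x\<close> e2_neg)
  have e6: "e2ennreal (max 0 (-b)) = ennreal (-y)" by (simp only: \<open>b = ereal y\<close> e2_neg)
  show ?thesis unfolding e1 e2 e3 e4 e5 e6 by (rule E)
qed

lemma arith_enn:
  fixes pS nS pA nA pB nB :: ennreal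
  assumes "pS + nA + nB = nS + pA + pB" "nA \<noteq> \<top>" "nB \<noteq> \<top>" "nS \<noteq> \<top>"
  shows "enn2ereal pS - enn2ereal nS = (enn2ereal pA - enn2ereal nA) + (enn2ereal pB - enn2ereal nB)"
proof (cases "pA = \<top> \<or> pB = \<top>")
  case True
  then have "pS = \<top>" using assms by (auto simp: top_add ennreal_add_eq_top)
  then show ?thesis using True assms by (auto simp: enn2ereal_fin)
next
  case False
  then have pS: "pS \<noteq> \<top>" using assms by (metis ennreal_add_eq_top)
  have e: "enn2real (pS + nA + nB) = enn2real (nS + pA + pB)" using assms by simp
  have "enn2real (pS + nA + nB) = enn2real pS + enn2real nA + enn2real nB"
    using assms(2-4) False pS by (simp add: enn2real_plus less_top[symmetric] del: enn2real_eq_0_iff)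
  moreover have "enn2real (nS + pA + pB) = enn2real nS + enn2real pA + enn2real pB"
    using assms(2-4) False pS by (simp add: enn2real_plus less_top[symmetric] del: enn2real_eq_0_iff)
  ultimately have r: "enn2real pS + enn2real nA + enn2real nB = enn2real nS + enn2real pA + enn2real pB"
    using e by simp
  show ?thesis using assms False pS by (simp add: enn2ereal_fin) (use r in linarith)
qed


lemma neg_sub:
  fixes a b :: ereal
  assumes "a \<noteq> -\<infinity>" "b \<noteq> -\<infinity>"
  shows "e2ennreal (max 0 (-(a+b))) \<le> e2ennreal (max 0 (-a)) + e2ennreal (max 0 (-b))"
proof (cases "a = \<infinity> \<or> b = \<infinity>")
  case True
  then have s: "a + b = \<infinity>" using assms by auto
  have "e2ennreal (max 0 (-(a+b))) = 0" unfolding s by (simp add: e2_inf)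
  then show ?thesis by simp
next
  case False
  then obtain x y where ab: "a = ereal x" "b = ereal y" using assms
    by (cases a; cases b) auto
  have "ennreal (-(x+y)) \<le> ennreal (max 0 (-x) + max 0 (-y))"
    by (intro ennreal_leI) (simp add: max_def)
  also have "\<dots> = ennreal (-x) + ennreal (-y)" by simp
  finally have E: "ennreal (-(x+y)) \<le> ennreal (-x) + ennreal (-y)" .
  have s: "a + b = ereal (x+y)" using ab by simp
  show ?thesis unfolding s unfolding ab e2_neg by (rule E)
qed

lemma pt_cmult:
  fixes a :: ereal assumes c: "c > 0"
  shows "e2ennreal (max 0 (ereal c * a)) = ennreal c * e2ennreal (max 0 a)"
proof (cases a)
  case (real x)
  have "ereal c * a = ereal (c*x)" using real by simp
  then show ?thesis unfolding real by (simp only: e2_pos) (simp add: ennreal_mult' c less_imp_le)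
next
  case PInf
  then show ?thesis using c by (simp add: e2_inf ennreal_mult_top)
next
  case MInf
  then show ?thesis using c by (simp add: e2_inf)
qed

lemma E_add:
  assumes [measurable]: "A \<in> borel_measurable M" "B \<in> borel_measurable M"
    and EA: "ereal_expectation M A > -\<infinity>" and EB: "ereal_expectation M B > -\<infinity>"
  shows "ereal_expectation M (\<lambda>\<omega>. A \<omega> + B \<omega>) = ereal_expectation M A + ereal_expectation M B"
proof -
  define pA where "pA = (\<lambda>\<omega>. e2ennreal (max 0 (A \<omega>)))"
  define nA where "nA = (\<lambda>\<omega>. e2ennreal (max 0 (- A \<omega>)))"
  define pB where "pB = (\<lambda>\<omega>. e2ennreal (max 0 (B \<omega>)))"
  define nB where "nB = (\<lambda>\<omega>. e2ennreal (max 0 (- B \<omega>)))"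
  define pS where "pS = (\<lambda>\<omega>. e2ennreal (max 0 (A \<omega> + B \<omega>)))"
  define nS where "nS = (\<lambda>\<omega>. e2ennreal (max 0 (- (A \<omega> + B \<omega>))))"
  have [measurable]: "pA \<in> borel_measurable M" "nA \<in> borel_measurable M"
    "pB \<in> borel_measurable M" "nB \<in> borel_measurable M"
    "pS \<in> borel_measurable M" "nS \<in> borel_measurable M"
    unfolding pA_def nA_def pB_def nB_def pS_def nS_def by measurable
  have fA: "integral\<^sup>N M nA \<noteq> \<infinity>" using EA unfolding ereal_expectation_def nA_def
    by (auto split: if_splits)
  have fB: "integral\<^sup>N M nB \<noteq> \<infinity>" using EB unfolding ereal_expectation_def nB_def
    by (auto split: if_splits)
  have aA: "AE \<omega> in M. A \<omega> \<noteq> -\<infinity>"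
    using nn_integral_PInf_AE[OF _ fA]
    by (rule eventually_mono) (auto simp: nA_def e2_inf)
  have aB: "AE \<omega> in M. B \<omega> \<noteq> -\<infinity>"
    using nn_integral_PInf_AE[OF _ fB]
    by (rule eventually_mono) (auto simp: nB_def e2_inf)
  have k: "AE \<omega> in M. pS \<omega> + nA \<omega> + nB \<omega> = nS \<omega> + pA \<omega> + pB \<omega>"
    using aA aB by eventually_elim (simp add: pS_def nA_def nB_def nS_def pA_def pB_def key_pt)
  have l: "AE \<omega> in M. nS \<omega> \<le> nA \<omega> + nB \<omega>"
    using aA aB by eventually_elim (simp add: nA_def nB_def nS_def neg_sub)
  have "integral\<^sup>N M pS + integral\<^sup>N M nA + integral\<^sup>N M nB
      = (\<integral>\<^sup>+\<omega>. pS \<omega> + nA \<omega> + nB \<omega> \<partial>M)"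
    by (simp add: nn_integral_add)
  also have "\<dots> = (\<integral>\<^sup>+\<omega>. nS \<omega> + pA \<omega> + pB \<omega> \<partial>M)"
    by (rule nn_integral_cong_AE[OF k])
  also have "\<dots> = integral\<^sup>N M nS + integral\<^sup>N M pA + integral\<^sup>N M pB"
    by (simp add: nn_integral_add)
  finally have eq: "integral\<^sup>N M pS + integral\<^sup>N M nA + integral\<^sup>N M nB
     = integral\<^sup>N M nS + integral\<^sup>N M pA + integral\<^sup>N M pB" .
  have "integral\<^sup>N M nS \<le> (\<integral>\<^sup>+\<omega>. nA \<omega> + nB \<omega> \<partial>M)"
    by (rule nn_integral_mono_AE[OF l])
  also have "\<dots> = integral\<^sup>N M nA + integral\<^sup>N M nB" by (simp add: nn_integral_add)
  finally have fS: "integral\<^sup>N M nS \<noteq> \<infinity>" using fA fB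
    by (metis ennreal_add_eq_top infinity_ennreal_def top.extremum_uniqueI)
  have "enn2ereal (integral\<^sup>N M pS) - enn2ereal (integral\<^sup>N M nS)
     = (enn2ereal (integral\<^sup>N M pA) - enn2ereal (integral\<^sup>N M nA)) + (enn2ereal (integral\<^sup>N M pB) - enn2ereal (integral\<^sup>N M nB))"
    by (rule arith_enn[OF eq]) (use fA fB fS in auto)
  then show ?thesis using fA fB fS
    unfolding ereal_expectation_def pA_def nA_def pB_def nB_def pS_def nS_def by simp
qed

lemma cm_aux:
  fixes P N :: ennreal assumes "N \<noteq> \<top>" "c > 0"
  shows "enn2ereal (ennreal c * P) - enn2ereal (ennreal c * N) = ereal c * (enn2ereal P - enn2ereal N)"
proof (cases "P = \<top>")
  case True
  then show ?thesis using assms by (simp add: enn2ereal_fin ennreal_mult_top times_ennreal.rep_eq)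
next
  case False
  then show ?thesis using assms by (simp add: enn2ereal_fin times_ennreal.rep_eq algebra_simps)
qed

lemma E_cmult:
  assumes [measurable]: "A \<in> borel_measurable M" and c: "c > 0"
  shows "ereal_expectation M (\<lambda>\<omega>. ereal c * A \<omega>) = ereal c * ereal_expectation M A"
proof -
  have m1: "(\<lambda>\<omega>. e2ennreal (max 0 (A \<omega>))) \<in> borel_measurable M" by measurable
  have m2: "(\<lambda>\<omega>. e2ennreal (max 0 (- A \<omega>))) \<in> borel_measurable M" by measurable
  have p: "(\<integral>\<^sup>+\<omega>. e2ennreal (max 0 (ereal c * A \<omega>)) \<partial>M) = ennreal c * (\<integral>\<^sup>+\<omega>. e2ennreal (max 0 (A \<omega>)) \<partial>M)"
    by (simp add: pt_cmult[OF c] nn_integral_cmult[OF m1])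
  have n: "(\<integral>\<^sup>+\<omega>. e2ennreal (max 0 (- (ereal c * A \<omega>))) \<partial>M) = ennreal c * (\<integral>\<^sup>+\<omega>. e2ennreal (max 0 (- A \<omega>)) \<partial>M)"
  proof -
    have "\<And>\<omega>. - (ereal c * A \<omega>) = ereal c * (- A \<omega>)" by simp
    then have "(\<integral>\<^sup>+\<omega>. e2ennreal (max 0 (- (ereal c * A \<omega>))) \<partial>M) = (\<integral>\<^sup>+\<omega>. ennreal c * e2ennreal (max 0 (- A \<omega>)) \<partial>M)"
      by (simp only: pt_cmult[OF c])
    then show ?thesis by (simp only: nn_integral_cmult[OF m2])
  qed
  show ?thesis
    unfolding ereal_expectation_def p n
    using c by (auto simp: ennreal_mult_eq_top_iff cm_aux)
qed

definition Vr :: "(real \<Rightarrow> real) \<Rightarrow> real \<Rightarrow> real" where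
  "Vr U t = real_of_ereal (conj_V U t)"

lemma util_mono: "utility U \<Longrightarrow> 0 < x \<Longrightarrow> x \<le> y \<Longrightarrow> U x \<le> U y"
  unfolding utility_def mono_on_def by auto

lemma util_bound:
  assumes u: "utility U" and t: "t > 0"
  shows "\<exists>B. \<forall>x>0. U x - x * t \<le> B"
proof -
  have "((\<lambda>x. U x / x) \<longlongrightarrow> 0) at_top" using u unfolding utility_def by auto
  then have "eventually (\<lambda>x. U x / x < t) at_top" using t by (rule order_tendstoD(2))
  then obtain N where N: "\<And>x. x \<ge> N \<Longrightarrow> U x / x < t" by (auto simp: eventually_at_top_linorder)
  define N' where "N' = max N 1"
  have "U x - x * t \<le> \<bar>U N'\<bar>" if "x > 0" for x
  proof (cases "x \<ge> N'")
    case True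
    then have "U x / x < t" using N N'_def by auto
    then have "U x < t * x" using that by (simp add: divide_less_eq)
    then show ?thesis by (simp add: algebra_simps)
  next
    case False
    then have "U x \<le> U N'" using util_mono[OF u that] by auto
    moreover have "x * t \<ge> 0" using that t by simp
    ultimately show ?thesis by linarith
  qed
  then show ?thesis by blast
qed

lemma conj_V_fin:
  assumes u: "utility U" and t: "t > 0"
  shows "conj_V U t = ereal (Vr U t)" "\<And>x. x > 0 \<Longrightarrow> U x - x * t \<le> Vr U t" "U 1 - t \<le> Vr U t"
proof -
  obtain B where B: "\<And>x. x > 0 \<Longrightarrow> U x - x * t \<le> B" using util_bound[OF u t] by blast
  have le: "conj_V U t \<le> ereal B" unfolding conj_V_def by (rule SUP_least) (use B in auto)
  have ge: "ereal (U x - x * t) \<le> conj_V U t" if "x > 0" for x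
    unfolding conj_V_def by (rule SUP_upper) (use that in auto)
  have fin: "\<bar>conj_V U t\<bar> \<noteq> \<infinity>" using le ge[of 1] by auto
  show eq: "conj_V U t = ereal (Vr U t)" unfolding Vr_def using fin by (simp add: ereal_real')
  show "\<And>x. x > 0 \<Longrightarrow> U x - x * t \<le> Vr U t" using ge eq by auto
  show "U 1 - t \<le> Vr U t" using ge[of 1] eq by auto
qed

lemma Vr_convex:
  assumes u: "utility U"
  shows "convex_on {0<..} (Vr U)"
proof (rule convex_onI)
  show "convex ({0<..} :: real set)" by simp
  fix t a b :: real assume t: "0 < t" "t < 1" and ab: "a \<in> {0<..}" "b \<in> {0<..}"
  let ?m = "(1 - t) *\<^sub>R a + t *\<^sub>R b"
  have m: "?m > 0" using t ab by (simp add: add_pos_pos)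
  have "conj_V U ?m \<le> ereal ((1 - t) * Vr U a + t * Vr U b)"
    unfolding conj_V_def
  proof (rule SUP_least)
    fix x :: real assume x: "x \<in> {0<..}"
    have "U x - x * ?m = (1 - t) * (U x - x * a) + t * (U x - x * b)"
      by (simp add: algebra_simps)
    also have "\<dots> \<le> (1 - t) * Vr U a + t * Vr U b"
      using conj_V_fin(2)[OF u _ x[simplified]] ab t
      by (intro add_mono mult_left_mono) auto
    finally show "ereal (U x - x * ?m) \<le> ereal ((1 - t) * Vr U a + t * Vr U b)" by simp
  qed
  then show "Vr U ?m \<le> (1 - t) * Vr U a + t * Vr U b"
    using conj_V_fin(1)[OF u m] by simp
qed

lemma Vr_approx:
  assumes u: "utility U" and t: "t > 0" and e: "e > 0"
  shows "\<exists>q\<in>\<rat>. q > 0 \<and> Vr U t - e < U q - q * t"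
proof -
  have "ereal (Vr U t - e) < conj_V U t" using conj_V_fin(1)[OF u t] e by simp
  then obtain x where x: "x > 0" "ereal (Vr U t - e) < ereal (U x - x * t)"
    unfolding conj_V_def less_SUP_iff by auto
  define d where "d = (U x - x * t - (Vr U t - e)) / t"
  have d: "d > 0" using x t by (simp add: d_def)
  obtain q where q: "q \<in> \<rat>" "x < q" "q < x + d" using Rats_dense_in_real[of x "x + d"] d by auto
  have "U x \<le> U q" using util_mono[OF u x(1)] q by simp
  moreover have "q * t < (x + d) * t" using q t by simp
  moreover have dt: "d * t = U x - x * t - (Vr U t - e)" using t by (simp add: d_def)
  moreover have "(x + d) * t = x * t + d * t" by (simp add: distrib_right)
  ultimately have "Vr U t - e < U q - q * t" by linarith
  moreover have "q > 0" using q x by simp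
  ultimately show ?thesis using q(1) by blast
qed

lemma Uext0:
  assumes u: "utility U"
  shows "U_ext U 0 = (INF z\<in>{0<..}. ereal (U z))"
proof -
  let ?L = "INF z\<in>{0<..}. ereal (U z)"
  have "((\<lambda>z. ereal (U z)) \<longlongrightarrow> ?L) (at_right 0)"
  proof (rule order_tendstoI)
    fix a assume a: "a < ?L"
    show "eventually (\<lambda>z. a < ereal (U z)) (at_right 0)"
      using eventually_at_right_less[of "0::real"]
    proof (rule eventually_mono)
      fix z :: real assume "0 < z"
      then have "?L \<le> ereal (U z)" by (intro INF_lower) auto
      then show "a < ereal (U z)" using a by simp
    qed
  next
    fix a assume a: "?L < a"
    then obtain z0 where z0: "z0 > 0" "ereal (U z0) < a" by (auto simp: INF_less_iff)
    show "eventually (\<lambda>z. ereal (U z) < a) (at_right 0)"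
      unfolding eventually_at_right_field
    proof (intro exI[of _ z0] conjI allI impI)
      fix y :: real assume "0 < y" "y < z0"
      then have "U y \<le> U z0" using util_mono[OF u] by simp
      then have "ereal (U y) \<le> ereal (U z0)" by simp
      then show "ereal (U y) < a" using z0(2) by (rule le_less_trans)
    qed (use z0 in auto)
  qed
  then have "Lim (at_right 0) (\<lambda>z. ereal (U z)) = ?L" by (intro tendsto_Lim) simp_all
  then show ?thesis unfolding U_ext_def by simp
qed

lemma Uext_le_U: "utility U \<Longrightarrow> 0 \<le> z \<Longrightarrow> 0 < w \<Longrightarrow> z \<le> w \<Longrightarrow> U_ext U z \<le> ereal (U w)"
proof -
  assume u: "utility U" and z: "0 \<le> z" "0 < w" "z \<le> w"
  show ?thesis
  proof (cases "z = 0")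
    case True
    then show ?thesis using Uext0[OF u] z by (auto intro!: INF_lower2[of w])
  next
    case False
    then show ?thesis using z util_mono[OF u, of z w] by (simp add: U_ext_def)
  qed
qed

lemma Uext_le:
  assumes u: "utility U" and t: "t > 0"
  shows "U_ext U z \<le> ereal (Vr U t + z * t)"
proof (cases "z > 0")
  case True
  then show ?thesis using conj_V_fin(2)[OF u t True] by (simp add: U_ext_def)
next
  case False
  show ?thesis
  proof (cases "z = 0")
    case True
    show ?thesis
    proof (rule ereal_le_epsilon2)
      fix e :: real assume e: "0 < e"
      have w: "e / t > 0" using e t by simp
      have "U_ext U z \<le> ereal (U (e/t))" using Uext_le_U[OF u _ w] True w by simp
      also have "\<dots> \<le> ereal (Vr U t + (e / t) * t)" using conj_V_fin(2)[OF u t w] by simp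
      also have "\<dots> = ereal (Vr U t + z * t) + ereal e" using t True by simp
      finally show "U_ext U z \<le> ereal (Vr U t + z * t) + ereal e" .
    qed
  next
    case False
    then show ?thesis using \<open>\<not> z > 0\<close> by (simp add: U_ext_def)
  qed
qed

definition UcSet :: "(real \<Rightarrow> real) \<Rightarrow> (real \<Rightarrow> ereal) set" where
  "UcSet U = {h. concave_ereal_on UNIV h \<and> (\<forall>z. h z \<noteq> \<infinity>) \<and> (\<forall>z. U_ext U z \<le> h z)}"

lemma U_c_alt: "U_c U x = (INF h\<in>UcSet U. h x)"
  unfolding U_c_def UcSet_def by simp

lemma Uc_ge: "U_ext U z \<le> U_c U z"
  unfolding U_c_alt UcSet_def by (rule INF_greatest) auto

lemma affine_concave: "concave_ereal_on UNIV (\<lambda>z. ereal (a + z * t))"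
  unfolding concave_ereal_on_def convex_def
proof (intro ballI allI impI)
  fix p q :: "real \<times> real" and u v :: real
  assume p: "p \<in> {(x, r). x \<in> UNIV \<and> ereal r \<le> ereal (a + x * t)}"
    and q: "q \<in> {(x, r). x \<in> UNIV \<and> ereal r \<le> ereal (a + x * t)}"
    and h: "0 \<le> u" "0 \<le> v" "u + v = 1"
  obtain x1 r1 where p': "p = (x1, r1)" by fastforce
  obtain x2 r2 where q': "q = (x2, r2)" by fastforce
  have r: "r1 \<le> a + x1 * t" "r2 \<le> a + x2 * t" using p q p' q' by auto
  have "u * r1 \<le> u * (a + x1 * t)" using h r by (intro mult_left_mono) auto
  moreover have "v * r2 \<le> v * (a + x2 * t)" using h r by (intro mult_left_mono) auto
  moreover have "u * (a + x1 * t) + v * (a + x2 * t) = (u + v) * a + (u * x1 + v * x2) * t"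
    by (simp add: algebra_simps)
  ultimately have le: "u * r1 + v * r2 \<le> a + (u * x1 + v * x2) * t" using h(3) by simp
  show "u *\<^sub>R p + v *\<^sub>R q \<in> {(x, r). x \<in> UNIV \<and> ereal r \<le> ereal (a + x * t)}"
    using le r h unfolding p' q' by (simp add: convex_def)
qed

lemma Uc_le:
  assumes u: "utility U" and t: "t > 0"
  shows "U_c U z \<le> ereal (Vr U t + z * t)"
proof -
  have "(\<lambda>z. ereal (Vr U t + z * t)) \<in> UcSet U"
    unfolding UcSet_def using affine_concave Uext_le[OF u t] by auto
  then show ?thesis unfolding U_c_alt by (rule INF_lower2) simp
qed

lemma conc_pt:
  assumes c: "convex {(x, r::real). x \<in> A \<and> ereal r \<le> h x}"
    and ab: "a \<in> A" "b \<in> A" and fin: "h a \<noteq> \<infinity>" "h b \<noteq> \<infinity>"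
    and uv: "u > 0" "v > 0" "u + v = 1"
  shows "ereal u * h a + ereal v * h b \<le> h (u * a + v * b)"
proof (cases "h a = -\<infinity> \<or> h b = -\<infinity>")
  case True
  have A: "ereal u * h a \<noteq> \<infinity>" using uv fin by (cases "h a") auto
  have B: "ereal v * h b \<noteq> \<infinity>" using uv fin by (cases "h b") auto
  have "ereal u * h a = -\<infinity> \<or> ereal v * h b = -\<infinity>" using True uv by auto
  then have eq: "ereal u * h a + ereal v * h b = -\<infinity>" using A B
    by (cases "ereal u * h a"; cases "ereal v * h b") auto
  show ?thesis unfolding eq by simp
next
  case False
  then obtain ra rb where r: "h a = ereal ra" "h b = ereal rb" using fin
    by (cases "h a"; cases "h b") auto
  have "(a, ra) \<in> {(x, r::real). x \<in> A \<and> ereal r \<le> h x}" "(b, rb) \<in> {(x, r::real). x \<in> A \<and> ereal r \<le> h x}"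
    using r ab by auto
  then have "u *\<^sub>R (a, ra) + v *\<^sub>R (b, rb) \<in> {(x, r::real). x \<in> A \<and> ereal r \<le> h x}"
    using c uv unfolding convex_def by (meson less_imp_le)
  then have "ereal (u * ra + v * rb) \<le> h (u * a + v * b)" by simp
  then show ?thesis using r by simp
qed

lemma Uc_concave:
  assumes uv: "u > 0" "v > 0" "u + v = 1"
  shows "ereal u * U_c U a + ereal v * U_c U b \<le> U_c U (u * a + v * b)"
  unfolding U_c_alt
proof (rule INF_greatest)
  fix h assume h: "h \<in> UcSet U"
  have "ereal u * (INF h\<in>UcSet U. h a) + ereal v * (INF h\<in>UcSet U. h b) \<le> ereal u * h a + ereal v * h b"
    using h uv by (intro add_mono ereal_mult_left_mono INF_lower) auto
  also have "\<dots> \<le> h (u * a + v * b)"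
    using h uv unfolding UcSet_def concave_ereal_on_def by (intro conc_pt[where A=UNIV]) auto
  finally show "ereal u * (INF h\<in>UcSet U. h a) + ereal v * (INF h\<in>UcSet U. h b) \<le> h (u * a + v * b)" .
qed

lemma Uc_fin:
  assumes u: "utility U" and z: "z > 0"
  shows "U_c U z = ereal (real_of_ereal (U_c U z))" "U z \<le> real_of_ereal (U_c U z)"
proof -
  have lo: "ereal (U z) \<le> U_c U z" using Uc_ge[of U z] z by (simp add: U_ext_def)
  have hi: "U_c U z \<le> ereal (Vr U 1 + z * 1)" using Uc_le[OF u, of 1] by simp
  have fin: "\<bar>U_c U z\<bar> \<noteq> \<infinity>" using lo hi by auto
  show "U_c U z = ereal (real_of_ereal (U_c U z))" using fin by (simp add: ereal_real')
  then show "U z \<le> real_of_ereal (U_c U z)" using lo by (metis ereal_less_eq(3))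
qed

lemma Uc_cont:
  assumes u: "utility U"
  shows "continuous_on {0<..} (\<lambda>z. real_of_ereal (U_c U z))"
proof -
  let ?p = "\<lambda>z. real_of_ereal (U_c U z)"
  have "convex_on {0<..} (\<lambda>z. - ?p z)"
  proof (rule convex_onI)
    show "convex ({0<..} :: real set)" by simp
    fix t a b :: real assume t: "0 < t" "t < 1" and ab: "a \<in> {0<..}" "b \<in> {0<..}"
    have m: "(1 - t) * a + t * b > 0" using t ab by (simp add: add_pos_pos)
    have "ereal (1 - t) * U_c U a + ereal t * U_c U b \<le> U_c U ((1 - t) * a + t * b)"
      using t by (intro Uc_concave) auto
    then have "ereal ((1 - t) * ?p a + t * ?p b) \<le> ereal (?p ((1 - t) * a + t * b))"
      using Uc_fin(1)[OF u, of a] Uc_fin(1)[OF u, of b] Uc_fin(1)[OF u m] ab by (metis greaterThan_iff times_ereal.simps(1) plus_ereal.simps(1))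
    then show "- ?p ((1 - t) *\<^sub>R a + t *\<^sub>R b) \<le> (1 - t) * - ?p a + t * - ?p b" by simp
  qed
  then have "continuous_on {0<..} (\<lambda>z. - ?p z)" by (intro convex_on_continuous) auto
  from continuous_on_minus[OF this] show ?thesis by simp
qed

lemma cont_meas_pos:
  fixes \<phi> :: "real \<Rightarrow> real"
  assumes c: "continuous_on {0<..} \<phi>" and g[measurable]: "g \<in> borel_measurable M"
    and pos: "\<And>\<omega>. \<omega> \<in> space M \<Longrightarrow> g \<omega> > 0"
  shows "(\<lambda>\<omega>. \<phi> (g \<omega>)) \<in> borel_measurable M"
proof -
  have [measurable]: "(\<lambda>z. indicator {0<..} z *\<^sub>R \<phi> z) \<in> borel_measurable borel"
    by (rule borel_measurable_continuous_on_indicator[OF _ c]) simp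
  have "(\<lambda>\<omega>. indicator {0<..} (g \<omega>) *\<^sub>R \<phi> (g \<omega>)) \<in> borel_measurable M" by measurable
  then show ?thesis by (rule measurable_cong[THEN iffD1, rotated]) (simp add: pos)
qed

lemma Uc_meas:
  assumes u: "utility U" and f[measurable]: "f \<in> borel_measurable M"
    and nn: "\<And>\<omega>. \<omega> \<in> space M \<Longrightarrow> f \<omega> \<ge> 0"
  shows "(\<lambda>\<omega>. U_c U (f \<omega>)) \<in> borel_measurable M"
proof -
  let ?p = "\<lambda>z. real_of_ereal (U_c U z)"
  have [measurable]: "(\<lambda>z. indicator {0<..} z *\<^sub>R ?p z) \<in> borel_measurable borel"
    by (rule borel_measurable_continuous_on_indicator[OF _ Uc_cont[OF u]]) simp
  have "(\<lambda>\<omega>. if 0 < f \<omega> then ereal (indicator {0<..} (f \<omega>) *\<^sub>R ?p (f \<omega>)) else U_c U 0) \<in> borel_measurable M"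
    by measurable
  then show ?thesis
  proof (rule measurable_cong[THEN iffD1, rotated])
    fix \<omega> assume w: "\<omega> \<in> space M"
    show "(if 0 < f \<omega> then ereal (indicator {0<..} (f \<omega>) *\<^sub>R ?p (f \<omega>)) else U_c U 0) = U_c U (f \<omega>)"
      using nn[OF w] Uc_fin(1)[OF u, of "f \<omega>"] by auto
  qed
qed

lemma slope_ineq:
  fixes h :: "real \<Rightarrow> ereal"
  assumes conc: "convex {(x, r::real). x \<in> {0<..} \<and> ereal r \<le> h x}"
    and x: "x > 0" "h x = ereal c"
    and z: "0 < z" "z < x" "ereal r \<le> h z"
    and z2: "x < z2" "ereal r2 \<le> h z2"
  shows "(r2 - c) / (z2 - x) \<le> (c - r) / (x - z)"
proof -
  define l where "l = (z2 - x) / (z2 - z)"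
  have l: "0 < l" "l < 1" using z z2 by (auto simp: l_def)
  have d: "z2 - z > 0" using z z2 by simp
  have e1: "1 - l = (x - z) / (z2 - z)" using d by (simp add: l_def field_simps)
  have "l * z + (1 - l) * z2 = (z2 - x) / (z2 - z) * z + (x - z) / (z2 - z) * z2"
    using e1 by (simp add: l_def)
  also have "\<dots> = ((z2 - x) * z + (x - z) * z2) / (z2 - z)" by (simp add: add_divide_distrib)
  also have "(z2 - x) * z + (x - z) * z2 = x * (z2 - z)" by (simp add: algebra_simps)
  finally have xl: "l * z + (1 - l) * z2 = x" using d by simp
  have "l *\<^sub>R (z, r) + (1 - l) *\<^sub>R (z2, r2) \<in> {(x, r::real). x \<in> {0<..} \<and> ereal r \<le> h x}"
    using conc z z2 x l unfolding convex_def
    by (metis (no_types, lifting) case_prodI diff_ge_0_iff_ge greaterThan_iff le_add_diff_inverse less_eq_real_def mem_Collect_eq order.strict_trans)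
  then have "ereal (l * r + (1 - l) * r2) \<le> h x" using xl by simp
  then have "l * r + (1 - l) * r2 \<le> c" using x by simp
  then have m: "(z2 - z) * (l * r + (1 - l) * r2) \<le> (z2 - z) * c" using d by (intro mult_left_mono) auto
  have a: "(z2 - z) * l = z2 - x" using d by (simp add: l_def)
  have b: "(z2 - z) * (1 - l) = x - z" using d e1 by simp
  have "(z2 - z) * (l * r + (1 - l) * r2) = ((z2 - z) * l) * r + ((z2 - z) * (1 - l)) * r2"
    by (simp add: algebra_simps)
  then have "(z2 - z) * (l * r + (1 - l) * r2) = (z2 - x) * r + (x - z) * r2" unfolding a b .
  then have "(z2 - x) * r + (x - z) * r2 \<le> (z2 - z) * c" using m by simp
  then have "(x - z) * (r2 - c) \<le> (z2 - x) * (c - r)" by (simp add: algebra_simps)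
  then show ?thesis using z z2 by (simp add: field_simps)
qed

lemma exists_below:
  fixes a :: ereal assumes "a > -\<infinity>" shows "\<exists>r. ereal r \<le> a"
  using assms by (cases a) auto

lemma support_line:
  fixes h :: "real \<Rightarrow> ereal"
  assumes conc: "convex {(x, r::real). x \<in> {0<..} \<and> ereal r \<le> h x}"
    and x: "x > 0" "h x = ereal c"
    and lo: "\<And>z. z > 0 \<Longrightarrow> h z > -\<infinity>"
    and bd: "\<And>z. z \<ge> x \<Longrightarrow> ereal m \<le> h z"
  shows "\<exists>s\<ge>0. \<forall>z>0. h z \<le> ereal (c + s * (z - x))"
proof -
  define L where "L = {(c - r) / (x - z) | z r. 0 < z \<and> z < x \<and> ereal r \<le> h z}"
  obtain r1 where r1: "ereal r1 \<le> h (x/2)" using exists_below[OF lo[of "x/2"]] x by auto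
  have "(c - r1) / (x - x/2) \<in> L" unfolding L_def
    by (intro CollectI exI[of _ "x/2"] exI[of _ r1]) (use r1 x in auto)
  then have Lne: "L \<noteq> {}" by auto
  obtain r2 where r2: "ereal r2 \<le> h (x+1)" using exists_below[OF lo[of "x+1"]] x by auto
  have Lb: "r2 - c \<le> l" if lL: "l \<in> L" for l
  proof -
    obtain z r where zr: "l = (c - r) / (x - z)" "0 < z" "z < x" "ereal r \<le> h z"
      using lL unfolding L_def by auto
    have "(r2 - c) / ((x+1) - x) \<le> (c - r) / (x - z)"
      by (rule slope_ineq[OF conc x zr(2-4)]) (use r2 in auto)
    then show ?thesis using zr by simp
  qed
  define s where "s = Inf L"
  have bdd: "bdd_below L" using Lb by (auto simp: bdd_below_def)
  have left: "r \<le> c + s * (z - x)" if "0 < z" "z < x" "ereal r \<le> h z" for z r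
  proof -
    have "(c - r) / (x - z) \<in> L" unfolding L_def using that by auto
    then have "s \<le> (c - r) / (x - z)" unfolding s_def using bdd by (rule cInf_lower)
    then have "s * (x - z) \<le> c - r" using that by (simp add: field_simps)
    then show ?thesis by (simp add: algebra_simps)
  qed
  have right: "r \<le> c + s * (z - x)" if "x < z" "ereal r \<le> h z" for z r
  proof -
    have "(r - c) / (z - x) \<le> s" unfolding s_def
      using Lne by (rule cInf_greatest) (use that x in \<open>auto simp: L_def intro!: slope_ineq[OF conc x]\<close>)
    then have "r - c \<le> s * (z - x)" using that by (simp add: field_simps)
    then show ?thesis by simp
  qed
  have all: "r \<le> c + s * (z - x)" if "0 < z" "ereal r \<le> h z" for z r
  proof -
    consider "z < x" | "z = x" | "x < z" by linarith
    then show ?thesis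
    proof cases
      case 1 then show ?thesis using left that by auto
    next
      case 2 then show ?thesis using that x by simp
    next
      case 3 then show ?thesis using right that by auto
    qed
  qed
  have hle: "h z \<le> ereal (c + s * (z - x))" if z: "0 < z" for z
  proof (cases "h z")
    case (real r)
    then show ?thesis using all[OF z, of r] by simp
  next
    case PInf
    then have "c + s * (z - x) + 1 \<le> c + s * (z - x)" using all[OF z, of "c + s * (z - x) + 1"] by simp
    then show ?thesis by simp
  next
    case MInf then show ?thesis by simp
  qed
  have "s \<ge> 0"
  proof (rule ccontr)
    assume "\<not> s \<ge> 0"
    then have s: "s < 0" by simp
    define z where "z = x + (\<bar>c - m\<bar> + 1) / (- s)"
    have q: "(\<bar>c - m\<bar> + 1) / (- s) > 0" using s by (intro divide_pos_pos) auto
    have zx: "z \<ge> x" "z > 0" using q x unfolding z_def by linarith+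
    have "s * (z - x) = - (\<bar>c - m\<bar> + 1)" using s by (simp add: z_def)
    then have "c + s * (z - x) < m" by linarith
    moreover have "ereal m \<le> ereal (c + s * (z - x))" using bd[OF zx(1)] hle[OF zx(2)] by (rule order_trans)
    ultimately show False by simp
  qed
  then show ?thesis using hle by blast
qed

lemma E_cong:
  assumes "\<And>\<omega>. \<omega> \<in> space M \<Longrightarrow> A \<omega> = B \<omega>"
  shows "ereal_expectation M A = ereal_expectation M B"
proof -
  have "(\<integral>\<^sup>+\<omega>. e2ennreal (max 0 (A \<omega>)) \<partial>M) = (\<integral>\<^sup>+\<omega>. e2ennreal (max 0 (B \<omega>)) \<partial>M)"
    by (rule nn_integral_cong) (simp add: assms)
  moreover have "(\<integral>\<^sup>+\<omega>. e2ennreal (max 0 (- A \<omega>)) \<partial>M) = (\<integral>\<^sup>+\<omega>. e2ennreal (max 0 (- B \<omega>)) \<partial>M)"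
    by (rule nn_integral_cong) (simp add: assms)
  ultimately show ?thesis unfolding ereal_expectation_def by simp
qed

lemma integrable_nn_fin: "integrable M f \<Longrightarrow> (\<integral>\<^sup>+x. ennreal (f x) \<partial>M) < \<infinity>"
  unfolding real_integrable_def by (simp add: less_top)

locale setting =
  fixes M :: "'a measure" and Z :: "'a \<Rightarrow> real" and U :: "real \<Rightarrow> real"
  assumes P: "prob_space M" and Zm[measurable]: "Z \<in> borel_measurable M"
    and Zpos: "\<And>\<omega>. \<omega> \<in> space M \<Longrightarrow> Z \<omega> > 0" and Zi: "integrable M Z"
    and u: "utility U"
    and fin: "\<And>y. y > 0 \<Longrightarrow> ereal_expectation M (\<lambda>\<omega>. conj_V U (y * Z \<omega>)) < \<infinity>"
begin

sublocale prob_space M by (rule P)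

definition vv :: "real \<Rightarrow> real" where
  "vv y = integral\<^sup>L M (\<lambda>\<omega>. Vr U (y * Z \<omega>))"

lemma V_meas: "y > 0 \<Longrightarrow> (\<lambda>\<omega>. Vr U (y * Z \<omega>)) \<in> borel_measurable M"
  by (rule cont_meas_pos[OF convex_on_continuous[OF _ Vr_convex[OF u]]]) (auto simp: Zpos)

lemma V_int:
  assumes y: "y > 0"
  shows "integrable M (\<lambda>\<omega>. Vr U (y * Z \<omega>))"
    "ereal_expectation M (\<lambda>\<omega>. conj_V U (y * Z \<omega>)) = ereal (vv y)"
proof -
  let ?h = "\<lambda>\<omega>. Vr U (y * Z \<omega>)"
  have [measurable]: "?h \<in> borel_measurable M" using V_meas[OF y] .
  have eq: "ereal_expectation M (\<lambda>\<omega>. conj_V U (y * Z \<omega>)) = ereal_expectation M (\<lambda>\<omega>. ereal (?h \<omega>))"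
    by (rule E_cong) (simp add: conj_V_fin(1)[OF u] Zpos y)
  have low: "U 1 - y * Z \<omega> \<le> ?h \<omega>" if "\<omega> \<in> space M" for \<omega>
    using conj_V_fin(3)[OF u, of "y * Z \<omega>"] Zpos[OF that] y by simp
  have i2: "integrable M (\<lambda>\<omega>. y * Z \<omega> - U 1)"
    using Zi by auto
  have N: "(\<integral>\<^sup>+\<omega>. ennreal (- ?h \<omega>) \<partial>M) \<le> (\<integral>\<^sup>+\<omega>. ennreal (y * Z \<omega> - U 1) \<partial>M)"
  proof (rule nn_integral_mono)
    fix \<omega> assume "\<omega> \<in> space M"
    then show "ennreal (- ?h \<omega>) \<le> ennreal (y * Z \<omega> - U 1)" using low[of \<omega>] by (intro ennreal_leI) linarith
  qed
  then have Nf: "(\<integral>\<^sup>+\<omega>. ennreal (- ?h \<omega>) \<partial>M) \<noteq> \<infinity>"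
    using integrable_nn_fin[OF i2] by (metis infinity_ennreal_def leD order.strict_trans1 top.not_eq_extremum)
  have "ereal_expectation M (\<lambda>\<omega>. ereal (?h \<omega>)) < \<infinity>" using fin[OF y] eq by simp
  then have Pf: "(\<integral>\<^sup>+\<omega>. ennreal (?h \<omega>) \<partial>M) \<noteq> \<infinity>"
    using Nf unfolding ereal_expectation_def e2_pos e2_neg by auto
  show i: "integrable M ?h" unfolding real_integrable_def using Pf Nf by simp
  show "ereal_expectation M (\<lambda>\<omega>. conj_V U (y * Z \<omega>)) = ereal (vv y)"
    unfolding eq vv_def by (rule E_real[OF i])
qed

lemma budget_int:
  assumes f: "f \<in> budget_set M Z x" and x: "x \<ge> 0"
  shows "integrable M (\<lambda>\<omega>. Z \<omega> * f \<omega>)" "integral\<^sup>L M (\<lambda>\<omega>. Z \<omega> * f \<omega>) \<le> x"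
proof -
  have [measurable]: "f \<in> borel_measurable M" and nn: "\<And>\<omega>. \<omega> \<in> space M \<Longrightarrow> f \<omega> \<ge> 0"
    and le: "(\<integral>\<^sup>+\<omega>. ennreal (Z \<omega> * f \<omega>) \<partial>M) \<le> ennreal x"
    using f unfolding budget_set_def by auto
  have pf: "(\<integral>\<^sup>+\<omega>. ennreal (Z \<omega> * f \<omega>) \<partial>M) \<noteq> \<infinity>" using le
    by (metis ennreal_less_top infinity_ennreal_def leD)
  have nf: "(\<integral>\<^sup>+\<omega>. ennreal (- (Z \<omega> * f \<omega>)) \<partial>M) = 0"
  proof (rule nn_integral_zero'[OF AE_I2])
    fix \<omega> assume w: "\<omega> \<in> space M"
    have "0 \<le> Z \<omega> * f \<omega>" using nn[OF w] Zpos[OF w] by simp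
    then show "ennreal (- (Z \<omega> * f \<omega>)) = 0" by (simp add: ennreal_neg)
  qed
  show i: "integrable M (\<lambda>\<omega>. Z \<omega> * f \<omega>)" unfolding real_integrable_def using pf nf by simp
  have "integral\<^sup>L M (\<lambda>\<omega>. Z \<omega> * f \<omega>) = enn2real (\<integral>\<^sup>+\<omega>. ennreal (Z \<omega> * f \<omega>) \<partial>M)"
  proof (rule integral_eq_nn_integral)
    show "AE \<omega> in M. 0 \<le> Z \<omega> * f \<omega>"
    proof (rule AE_I2)
      fix \<omega> assume w: "\<omega> \<in> space M"
      show "0 \<le> Z \<omega> * f \<omega>" using nn[OF w] Zpos[OF w] by simp
    qed
  qed simp
  also have "\<dots> \<le> enn2real (ennreal x)" by (rule enn2real_mono[OF le]) simp
  finally show "integral\<^sup>L M (\<lambda>\<omega>. Z \<omega> * f \<omega>) \<le> x" using x by simp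
qed

lemma upper:
  assumes W: "\<And>z t. 0 \<le> z \<Longrightarrow> 0 < t \<Longrightarrow> W z \<le> ereal (Vr U t + z * t)"
    and f: "f \<in> budget_set M Z x" and x: "x \<ge> 0" and y: "y > 0"
  shows "ereal_expectation M (\<lambda>\<omega>. W (f \<omega>)) \<le> ereal (vv y + x * y)"
proof -
  have nn: "\<And>\<omega>. \<omega> \<in> space M \<Longrightarrow> f \<omega> \<ge> 0" using f unfolding budget_set_def by auto
  have "ereal_expectation M (\<lambda>\<omega>. W (f \<omega>))
      \<le> ereal_expectation M (\<lambda>\<omega>. ereal (Vr U (y * Z \<omega>) + y * (Z \<omega> * f \<omega>)))"
  proof (rule E_mono)
    fix \<omega> assume w: "\<omega> \<in> space M"
    have "W (f \<omega>) \<le> ereal (Vr U (y * Z \<omega>) + f \<omega> * (y * Z \<omega>))"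
      using W[OF nn[OF w], of "y * Z \<omega>"] Zpos[OF w] y by simp
    then show "W (f \<omega>) \<le> ereal (Vr U (y * Z \<omega>) + y * (Z \<omega> * f \<omega>))" by (simp add: algebra_simps)
  qed
  also have "\<dots> = ereal (integral\<^sup>L M (\<lambda>\<omega>. Vr U (y * Z \<omega>) + y * (Z \<omega> * f \<omega>)))"
    by (rule E_real) (use V_int(1)[OF y] budget_int(1)[OF f x] in auto)
  also have "integral\<^sup>L M (\<lambda>\<omega>. Vr U (y * Z \<omega>) + y * (Z \<omega> * f \<omega>))
      = vv y + y * integral\<^sup>L M (\<lambda>\<omega>. Z \<omega> * f \<omega>)"
    using V_int(1)[OF y] budget_int(1)[OF f x] by (simp add: vv_def)
  also have "\<dots> \<le> vv y + x * y" using budget_int(2)[OF f x] y by (simp add: mult.commute)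
  finally show ?thesis by simp
qed

lemma value_upper:
  assumes W: "\<And>z t. 0 \<le> z \<Longrightarrow> 0 < t \<Longrightarrow> W z \<le> ereal (Vr U t + z * t)"
    and x: "x \<ge> 0" and y: "y > 0"
  shows "value_fun M Z W x \<le> ereal (vv y + x * y)"
  unfolding value_fun_def by (rule SUP_least) (rule upper[OF W _ x y])

end

lemma ereal_sub_le: "(a::ereal) \<le> ereal (b + c) \<Longrightarrow> a - ereal c \<le> ereal b"
  by (cases a) auto

lemma ereal_sub_ge: "ereal a \<le> (b::ereal) \<Longrightarrow> ereal (a - c) \<le> b - ereal c"
  by (cases b) auto

context setting begin

abbreviation "g \<equiv> value_fun M Z (U_ext U)"
abbreviation "G \<equiv> value_fun M Z (U_c U)"

lemma g_upper: "x \<ge> 0 \<Longrightarrow> y > 0 \<Longrightarrow> g x \<le> ereal (vv y + x * y)"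
  by (rule value_upper) (use Uext_le[OF u] in auto)

lemma G_upper: "x \<ge> 0 \<Longrightarrow> y > 0 \<Longrightarrow> G x \<le> ereal (vv y + x * y)"
  by (rule value_upper) (use Uc_le[OF u] in auto)

lemma part1_le: "y > 0 \<Longrightarrow> (SUP x\<in>{0<..}. g x - ereal (x * y)) \<le> ereal (vv y)"
  by (rule SUP_least) (auto intro!: ereal_sub_le g_upper)

lemma int_pos: "integral\<^sup>L M Z > 0"
proof -
  have nn: "AE \<omega> in M. 0 \<le> Z \<omega>" by (rule AE_I2) (simp add: Zpos less_imp_le)
  have "integral\<^sup>L M Z \<ge> 0" using nn by (rule integral_nonneg_AE)
  moreover have "integral\<^sup>L M Z \<noteq> 0"
  proof
    assume "integral\<^sup>L M Z = 0"
    then have "AE \<omega> in M. Z \<omega> = 0" using integral_nonneg_eq_0_iff_AE[OF Zi nn] by simp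
    then have "AE \<omega> in M. False" by (rule AE_mp) (auto intro!: AE_I2 dest: Zpos)
    then show False using AE_False by simp
  qed
  ultimately show ?thesis by simp
qed

lemma in_budget:
  assumes [measurable]: "f \<in> borel_measurable M" and nn: "\<And>\<omega>. \<omega> \<in> space M \<Longrightarrow> f \<omega> \<ge> 0"
    and i: "integrable M (\<lambda>\<omega>. Z \<omega> * f \<omega>)" and le: "integral\<^sup>L M (\<lambda>\<omega>. Z \<omega> * f \<omega>) \<le> x"
  shows "f \<in> budget_set M Z x"
proof -
  have "(\<integral>\<^sup>+\<omega>. ennreal (Z \<omega> * f \<omega>) \<partial>M) = ennreal (integral\<^sup>L M (\<lambda>\<omega>. Z \<omega> * f \<omega>))"
  proof (rule nn_integral_eq_integral[OF i])
    show "AE \<omega> in M. 0 \<le> Z \<omega> * f \<omega>"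
    proof (rule AE_I2)
      fix \<omega> assume w: "\<omega> \<in> space M"
      show "0 \<le> Z \<omega> * f \<omega>" using nn[OF w] Zpos[OF w] by simp
    qed
  qed
  also have "\<dots> \<le> ennreal x" using le by (rule ennreal_leI)
  finally show ?thesis unfolding budget_set_def using nn by auto
qed

lemma g_low: "x > 0 \<Longrightarrow> ereal (U (x / integral\<^sup>L M Z)) \<le> g x"
proof -
  assume x: "x > 0"
  define k where "k = x / integral\<^sup>L M Z"
  have k: "k > 0" using x int_pos by (simp add: k_def)
  have "(\<lambda>\<omega>. k) \<in> budget_set M Z x"
  proof (rule in_budget)
    show "integrable M (\<lambda>\<omega>. Z \<omega> * k)" using Zi by simp
    show "integral\<^sup>L M (\<lambda>\<omega>. Z \<omega> * k) \<le> x" using int_pos by (simp add: k_def)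
  qed (use k in auto)
  then have "ereal_expectation M (\<lambda>\<omega>. U_ext U k) \<le> g x"
    unfolding value_fun_def by (rule SUP_upper)
  moreover have "ereal_expectation M (\<lambda>\<omega>. U_ext U k) = ereal (U k)"
    using E_real[of M "\<lambda>\<omega>. U k"] k by (simp add: U_ext_def prob_space.prob_space[OF P])
  ultimately show ?thesis by (simp add: k_def)
qed

lemma g_mono: "0 \<le> x \<Longrightarrow> x \<le> x' \<Longrightarrow> g x \<le> g x'"
  unfolding value_fun_def
  by (rule SUP_subset_mono) (auto simp: budget_set_def intro: order_trans ennreal_leI)

end

context setting begin

lemma construction:
  assumes y: "y > 0" and e: "e > 0" and d: "d > 0"
  shows "\<exists>x>0. ereal (vv y - e - d * y) \<le> g x - ereal (x * y)"
proof -
  define Qp where "Qp = {q\<in>\<rat>. q > (0::real)}"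
  have cQ: "countable Qp" unfolding Qp_def by (rule countable_subset[OF _ countable_rat]) auto
  have neQ: "Qp \<noteq> {}" unfolding Qp_def by (auto intro!: exI[of _ 1])
  define r where "r = from_nat_into Qp"
  have rQ: "r n \<in> Qp" for n unfolding r_def using neQ by (rule from_nat_into)
  have surj: "\<exists>n. r n = q" if "q \<in> Qp" for q
    using that range_from_nat_into[OF neQ cQ] unfolding r_def by (metis rangeE)
  have y2: "y / 2 > 0" using y by simp
  have [measurable]: "(\<lambda>\<omega>. Vr U (y * Z \<omega>)) \<in> borel_measurable M" using V_meas[OF y] .
  define Pn where "Pn n \<omega> \<longleftrightarrow> Vr U (y * Z \<omega>) - e < U (r n) - r n * (y * Z \<omega>)" for n \<omega>
  have Pm: "(\<lambda>\<omega>. Pn n \<omega>) \<in> measurable M (count_space UNIV)" for n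
  proof -
    have a: "(\<lambda>\<omega>. Vr U (y * Z \<omega>) - e) \<in> borel_measurable M" by measurable
    have b: "(\<lambda>\<omega>. U (r n) - r n * (y * Z \<omega>)) \<in> borel_measurable M" by measurable
    have "Measurable.pred M (\<lambda>\<omega>. Vr U (y * Z \<omega>) - e < U (r n) - r n * (y * Z \<omega>))"
      by (rule borel_measurable_pred_less[OF a b])
    then show ?thesis unfolding Measurable.pred_def Pn_def .
  qed
  define N where "N \<omega> = (LEAST n. Pn n \<omega>)" for \<omega>
  have Nm: "N \<in> measurable M (count_space UNIV)" unfolding N_def by (rule measurable_Least[OF Pm])
  define f where "f \<omega> = r (N \<omega>)" for \<omega>
  have PN: "Pn (N \<omega>) \<omega>" if w: "\<omega> \<in> space M" for \<omega>
  proof -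
    have t: "y * Z \<omega> > 0" using y Zpos[OF w] by simp
    obtain q where "q \<in> \<rat>" "q > 0" "Vr U (y * Z \<omega>) - e < U q - q * (y * Z \<omega>)"
      using Vr_approx[OF u t e] by blast
    then obtain n where "Pn n \<omega>" using surj[of q] unfolding Qp_def Pn_def by auto
    then show ?thesis unfolding N_def by (rule LeastI)
  qed
  have fm[measurable]: "f \<in> borel_measurable M" unfolding f_def
    by (rule measurable_compose[OF Nm]) simp
  have Ufm[measurable]: "(\<lambda>\<omega>. U (f \<omega>)) \<in> borel_measurable M" unfolding f_def
    by (rule measurable_compose[OF Nm, of "\<lambda>n. U (r n)"]) simp
  have fpos: "f \<omega> > 0" for \<omega> using rQ unfolding f_def Qp_def by auto
  have A: "Vr U (y * Z \<omega>) - e < U (f \<omega>) - f \<omega> * (y * Z \<omega>)" if "\<omega> \<in> space M" for \<omega>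
    using PN[OF that] unfolding Pn_def f_def .
  have B: "U (f \<omega>) - f \<omega> * (y / 2 * Z \<omega>) \<le> Vr U (y / 2 * Z \<omega>)" if w: "\<omega> \<in> space M" for \<omega>
    using conj_V_fin(2)[OF u _ fpos, of "y / 2 * Z \<omega>"] y Zpos[OF w] by simp
  have i1: "integrable M (\<lambda>\<omega>. Vr U (y * Z \<omega>))" using V_int(1)[OF y] .
  have i2: "integrable M (\<lambda>\<omega>. Vr U (y / 2 * Z \<omega>))" using V_int(1)[OF y2] .
  define bd where "bd \<omega> = (2 / y) * (Vr U (y / 2 * Z \<omega>) - Vr U (y * Z \<omega>) + e)" for \<omega>
  have bdi: "integrable M bd" unfolding bd_def using i1 i2 by auto
  have Zf_le: "Z \<omega> * f \<omega> \<le> bd \<omega>" if w: "\<omega> \<in> space M" for \<omega>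
  proof -
    have "y / 2 * (Z \<omega> * f \<omega>) \<le> Vr U (y / 2 * Z \<omega>) - Vr U (y * Z \<omega>) + e"
      using A[OF w] B[OF w] by (simp add: algebra_simps)
    then have "(2 / y) * (y / 2 * (Z \<omega> * f \<omega>)) \<le> bd \<omega>"
      unfolding bd_def using y by (intro mult_left_mono) auto
    then show ?thesis using y by simp
  qed
  have Zf_nn: "0 \<le> Z \<omega> * f \<omega>" if w: "\<omega> \<in> space M" for \<omega>
    using Zpos[OF w] fpos[of \<omega>] by simp
  have iZf: "integrable M (\<lambda>\<omega>. Z \<omega> * f \<omega>)"
  proof (rule Bochner_Integration.integrable_bound[OF bdi])
    show "AE \<omega> in M. norm (Z \<omega> * f \<omega>) \<le> norm (bd \<omega>)"
    proof (rule AE_I2)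
      fix \<omega> assume w: "\<omega> \<in> space M"
      show "norm (Z \<omega> * f \<omega>) \<le> norm (bd \<omega>)" using Zf_le[OF w] Zf_nn[OF w] by simp
    qed
  qed simp
  define bd2 where "bd2 \<omega> = \<bar>Vr U (y * Z \<omega>)\<bar> + e + y * (Z \<omega> * f \<omega>) + \<bar>Vr U (y / 2 * Z \<omega>)\<bar> + y / 2 * (Z \<omega> * f \<omega>)" for \<omega>
  have bd2i: "integrable M bd2" unfolding bd2_def using i1 i2 iZf by auto
  have iUf: "integrable M (\<lambda>\<omega>. U (f \<omega>))"
  proof (rule Bochner_Integration.integrable_bound[OF bd2i])
    show "AE \<omega> in M. norm (U (f \<omega>)) \<le> norm (bd2 \<omega>)"
    proof (rule AE_I2)
      fix \<omega> assume w: "\<omega> \<in> space M"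
      have l: "Vr U (y * Z \<omega>) - e + y * (Z \<omega> * f \<omega>) < U (f \<omega>)" using A[OF w] by (simp add: algebra_simps)
      have h: "U (f \<omega>) \<le> Vr U (y / 2 * Z \<omega>) + y / 2 * (Z \<omega> * f \<omega>)" using B[OF w] by (simp add: algebra_simps)
      have p: "y * (Z \<omega> * f \<omega>) \<ge> 0" using Zf_nn[OF w] y by simp
      have q: "y / 2 * (Z \<omega> * f \<omega>) = (y * (Z \<omega> * f \<omega>)) / 2" by simp
      have a1: "Vr U (y * Z \<omega>) \<ge> - \<bar>Vr U (y * Z \<omega>)\<bar>" "Vr U (y / 2 * Z \<omega>) \<le> \<bar>Vr U (y / 2 * Z \<omega>)\<bar>"
        by auto
      have c1: "U (f \<omega>) \<le> bd2 \<omega>" unfolding bd2_def using h p q a1 e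
        using abs_ge_zero[of "Vr U (y * Z \<omega>)"] by linarith
      have c2: "- U (f \<omega>) \<le> bd2 \<omega>" unfolding bd2_def using l p q a1 e by linarith
      have "\<bar>U (f \<omega>)\<bar> \<le> bd2 \<omega>" using c1 c2 by (simp add: abs_le_iff)
      then show "norm (U (f \<omega>)) \<le> norm (bd2 \<omega>)" by simp
    qed
  qed simp
  define X where "X = integral\<^sup>L M (\<lambda>\<omega>. Z \<omega> * f \<omega>)"
  have X0: "X \<ge> 0" unfolding X_def by (rule integral_nonneg_AE) (auto intro!: AE_I2 Zf_nn)
  define x where "x = X + d"
  have x: "x > 0" using X0 d by (simp add: x_def)
  have fb: "f \<in> budget_set M Z x"
    by (rule in_budget[OF fm _ iZf]) (use fpos X0 d in \<open>auto simp: X_def x_def less_imp_le\<close>)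
  have "ereal_expectation M (\<lambda>\<omega>. U_ext U (f \<omega>)) \<le> g x"
    unfolding value_fun_def using fb by (rule SUP_upper)
  moreover have "ereal_expectation M (\<lambda>\<omega>. U_ext U (f \<omega>)) = ereal (integral\<^sup>L M (\<lambda>\<omega>. U (f \<omega>)))"
  proof -
    have "ereal_expectation M (\<lambda>\<omega>. U_ext U (f \<omega>)) = ereal_expectation M (\<lambda>\<omega>. ereal (U (f \<omega>)))"
      by (rule E_cong) (simp add: U_ext_def fpos)
    then show ?thesis using E_real[OF iUf] by simp
  qed
  moreover have "vv y - e + y * X \<le> integral\<^sup>L M (\<lambda>\<omega>. U (f \<omega>))"
  proof -
    have "integral\<^sup>L M (\<lambda>\<omega>. Vr U (y * Z \<omega>) - e + y * (Z \<omega> * f \<omega>)) \<le> integral\<^sup>L M (\<lambda>\<omega>. U (f \<omega>))"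
    proof (rule integral_mono)
      show "integrable M (\<lambda>\<omega>. Vr U (y * Z \<omega>) - e + y * (Z \<omega> * f \<omega>))" using i1 iZf by auto
      fix \<omega> assume w: "\<omega> \<in> space M"
      show "Vr U (y * Z \<omega>) - e + y * (Z \<omega> * f \<omega>) \<le> U (f \<omega>)" using A[OF w] by (simp add: algebra_simps)
    qed (rule iUf)
    moreover have "integral\<^sup>L M (\<lambda>\<omega>. Vr U (y * Z \<omega>) - e + y * (Z \<omega> * f \<omega>)) = vv y - e + y * X"
      using i1 iZf by (simp add: vv_def X_def prob_space.prob_space[OF P])
    ultimately show ?thesis by simp
  qed
  ultimately have "ereal (vv y - e + y * X) \<le> g x" by (metis ereal_less_eq(3) order_trans)
  then have "ereal (vv y - e + y * X - x * y) \<le> g x - ereal (x * y)" by (rule ereal_sub_ge)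
  moreover have "vv y - e + y * X - x * y = vv y - e - d * y" by (simp add: x_def algebra_simps)
  ultimately show ?thesis using x by auto
qed

end

context setting begin

lemma part1:
  assumes y: "y > 0" shows "ereal (vv y) = (SUP x\<in>{0<..}. g x - ereal (x * y))"
proof (rule antisym)
  show "(SUP x\<in>{0<..}. g x - ereal (x * y)) \<le> ereal (vv y)" by (rule part1_le[OF y])
  show "ereal (vv y) \<le> (SUP x\<in>{0<..}. g x - ereal (x * y))"
  proof (rule ereal_le_epsilon2)
    fix e :: real assume e: "0 < e"
    obtain x where x: "x > 0" "ereal (vv y - e/2 - (e / (2*y)) * y) \<le> g x - ereal (x * y)"
      using construction[OF y, of "e/2" "e/(2*y)"] e y by auto
    have eq: "vv y - e/2 - (e / (2*y)) * y = vv y - e" using y by (simp add: field_simps)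
    have "ereal (vv y - e) \<le> (SUP x\<in>{0<..}. g x - ereal (x * y))"
      using x(2)[unfolded eq] x(1) by (intro SUP_upper2[of x]) auto
    then have "ereal (vv y - e) + ereal e \<le> (SUP x\<in>{0<..}. g x - ereal (x * y)) + ereal e"
      by (rule add_right_mono)
    then show "ereal (vv y) \<le> (SUP x\<in>{0<..}. g x - ereal (x * y)) + ereal e" by simp
  qed
qed

lemma g_le_G: "g x \<le> G x"
  unfolding value_fun_def
proof (rule SUP_mono)
  fix f assume f: "f \<in> budget_set M Z x"
  have "ereal_expectation M (\<lambda>\<omega>. U_ext U (f \<omega>)) \<le> ereal_expectation M (\<lambda>\<omega>. U_c U (f \<omega>))"
    by (rule E_mono) (rule Uc_ge)
  then show "\<exists>m\<in>budget_set M Z x. ereal_expectation M (\<lambda>\<omega>. U_ext U (f \<omega>)) \<le> ereal_expectation M (\<lambda>\<omega>. U_c U (m \<omega>))"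
    using f by blast
qed

lemma G_comb:
  assumes x: "x1 > 0" "x2 > 0" and uv: "u > 0" "v > 0" "u + v = 1"
    and r: "ereal r1 \<le> G x1" "ereal r2 \<le> G x2"
  shows "ereal (u * r1 + v * r2) \<le> G (u * x1 + v * x2)"
proof (rule ereal_le_epsilon2)
  fix e :: real assume e: "0 < e"
  have "ereal (r1 - e) < ereal r1" using e by simp
  then have "ereal (r1 - e) < G x1" using r(1) by (rule less_le_trans)
  then obtain f1 where f1: "f1 \<in> budget_set M Z x1" "ereal (r1 - e) < ereal_expectation M (\<lambda>\<omega>. U_c U (f1 \<omega>))"
    unfolding value_fun_def less_SUP_iff by blast
  have "ereal (r2 - e) < ereal r2" using e by simp
  then have "ereal (r2 - e) < G x2" using r(2) by (rule less_le_trans)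
  then obtain f2 where f2: "f2 \<in> budget_set M Z x2" "ereal (r2 - e) < ereal_expectation M (\<lambda>\<omega>. U_c U (f2 \<omega>))"
    unfolding value_fun_def less_SUP_iff by blast
  have [measurable]: "f1 \<in> borel_measurable M" "f2 \<in> borel_measurable M"
    and nn1: "\<And>\<omega>. \<omega> \<in> space M \<Longrightarrow> f1 \<omega> \<ge> 0" and nn2: "\<And>\<omega>. \<omega> \<in> space M \<Longrightarrow> f2 \<omega> \<ge> 0"
    using f1(1) f2(1) unfolding budget_set_def by auto
  define f where "f \<omega> = u * f1 \<omega> + v * f2 \<omega>" for \<omega>
  have [measurable]: "f \<in> borel_measurable M" unfolding f_def by measurable
  have nn: "f \<omega> \<ge> 0" if "\<omega> \<in> space M" for \<omega> using nn1[OF that] nn2[OF that] uv by (simp add: f_def)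
  have i1: "integrable M (\<lambda>\<omega>. Z \<omega> * f1 \<omega>)" "integral\<^sup>L M (\<lambda>\<omega>. Z \<omega> * f1 \<omega>) \<le> x1"
    using budget_int[OF f1(1)] x by auto
  have i2: "integrable M (\<lambda>\<omega>. Z \<omega> * f2 \<omega>)" "integral\<^sup>L M (\<lambda>\<omega>. Z \<omega> * f2 \<omega>) \<le> x2"
    using budget_int[OF f2(1)] x by auto
  have eqf: "(\<lambda>\<omega>. Z \<omega> * f \<omega>) = (\<lambda>\<omega>. u * (Z \<omega> * f1 \<omega>) + v * (Z \<omega> * f2 \<omega>))"
    by (auto simp: f_def algebra_simps)
  have fb: "f \<in> budget_set M Z (u * x1 + v * x2)"
  proof (rule in_budget)
    show "integrable M (\<lambda>\<omega>. Z \<omega> * f \<omega>)" unfolding eqf using i1 i2 by auto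
    have "integral\<^sup>L M (\<lambda>\<omega>. Z \<omega> * f \<omega>) = u * integral\<^sup>L M (\<lambda>\<omega>. Z \<omega> * f1 \<omega>) + v * integral\<^sup>L M (\<lambda>\<omega>. Z \<omega> * f2 \<omega>)"
      unfolding eqf using i1 i2 by simp
    also have "\<dots> \<le> u * x1 + v * x2" using i1 i2 uv by (intro add_mono mult_left_mono) auto
    finally show "integral\<^sup>L M (\<lambda>\<omega>. Z \<omega> * f \<omega>) \<le> u * x1 + v * x2" .
  qed (use nn in auto)
  let ?A1 = "\<lambda>\<omega>. U_c U (f1 \<omega>)" and ?A2 = "\<lambda>\<omega>. U_c U (f2 \<omega>)"
  have m1[measurable]: "?A1 \<in> borel_measurable M" by (rule Uc_meas[OF u]) (use nn1 in auto)
  have m2[measurable]: "?A2 \<in> borel_measurable M" by (rule Uc_meas[OF u]) (use nn2 in auto)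
  have e1: "ereal_expectation M (\<lambda>\<omega>. ereal u * ?A1 \<omega>) = ereal u * ereal_expectation M ?A1"
    by (rule E_cmult[OF m1 uv(1)])
  have e2: "ereal_expectation M (\<lambda>\<omega>. ereal v * ?A2 \<omega>) = ereal v * ereal_expectation M ?A2"
    by (rule E_cmult[OF m2 uv(2)])
  have l1: "ereal (u * (r1 - e)) \<le> ereal u * ereal_expectation M ?A1"
    using ereal_mult_left_mono[OF less_imp_le[OF f1(2)], of "ereal u"] uv by simp
  have l2: "ereal (v * (r2 - e)) \<le> ereal v * ereal_expectation M ?A2"
    using ereal_mult_left_mono[OF less_imp_le[OF f2(2)], of "ereal v"] uv by simp
  have "ereal (u * r1 + v * r2 - e) = ereal (u * (r1 - e)) + ereal (v * (r2 - e))"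
  proof -
    have "u * (r1 - e) + v * (r2 - e) = u * r1 + v * r2 - (u + v) * e" by (simp add: algebra_simps)
    then show ?thesis using uv(3) by simp
  qed
  also have "\<dots> \<le> ereal u * ereal_expectation M ?A1 + ereal v * ereal_expectation M ?A2"
    using l1 l2 by (rule add_mono)
  also have "\<dots> = ereal_expectation M (\<lambda>\<omega>. ereal u * ?A1 \<omega> + ereal v * ?A2 \<omega>)"
    unfolding e1[symmetric] e2[symmetric]
    by (rule E_add[symmetric]) (use l1 l2 e1 e2 in \<open>auto intro: less_le_trans\<close>)
  also have "\<dots> \<le> ereal_expectation M (\<lambda>\<omega>. U_c U (f \<omega>))"
    by (rule E_mono) (use uv in \<open>simp add: f_def Uc_concave\<close>)
  also have "\<dots> \<le> G (u * x1 + v * x2)" unfolding value_fun_def using fb by (rule SUP_upper)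
  finally have "ereal (u * r1 + v * r2 - e) \<le> G (u * x1 + v * x2)" .
  then have "ereal (u * r1 + v * r2 - e) + ereal e \<le> G (u * x1 + v * x2) + ereal e" by (rule add_right_mono)
  then show "ereal (u * r1 + v * r2) \<le> G (u * x1 + v * x2) + ereal e" by simp
qed

end

context setting begin

lemma G_conc: "concave_ereal_on {0<..} G"
  unfolding concave_ereal_on_def convex_def
proof (intro ballI allI impI)
  fix p q :: "real \<times> real" and a b :: real
  assume p: "p \<in> {(x, r). x \<in> {0<..} \<and> ereal r \<le> G x}"
    and q: "q \<in> {(x, r). x \<in> {0<..} \<and> ereal r \<le> G x}"
    and ab: "0 \<le> a" "0 \<le> b" "a + b = 1"
  obtain x1 r1 where p': "p = (x1, r1)" by fastforce
  obtain x2 r2 where q': "q = (x2, r2)" by fastforce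
  have h: "x1 > 0" "ereal r1 \<le> G x1" "x2 > 0" "ereal r2 \<le> G x2" using p q p' q' by auto
  show "a *\<^sub>R p + b *\<^sub>R q \<in> {(x, r). x \<in> {0<..} \<and> ereal r \<le> G x}"
  proof (cases "a = 0 \<or> b = 0")
    case True
    then show ?thesis
    proof
      assume "a = 0"
      then have "b = 1" using ab by simp
      then show ?thesis using \<open>a = 0\<close> q by simp
    next
      assume "b = 0"
      then have "a = 1" using ab by simp
      then show ?thesis using \<open>b = 0\<close> p by simp
    qed
  next
    case False
    then have a: "a > 0" "b > 0" using ab by auto
    have "a * x1 + b * x2 > 0" using a h by (simp add: add_pos_pos)
    moreover have "ereal (a * r1 + b * r2) \<le> G (a * x1 + b * x2)"
      by (rule G_comb[OF h(1,3) a ab(3) h(2,4)])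
    ultimately show ?thesis unfolding p' q' by simp
  qed
qed

lemma part2:
  assumes x: "x > 0"
  shows "G x = concave_envelope_on {0<..} g x"
proof (rule antisym)
  show "G x \<le> concave_envelope_on {0<..} g x"
    unfolding concave_envelope_on_def
  proof (rule INF_greatest)
    fix h assume "h \<in> {h. concave_ereal_on {0<..} h \<and> (\<forall>z\<in>{0<..}. g z \<le> h z)}"
    then have hc: "concave_ereal_on {0<..} h" and hg: "\<And>z. z > 0 \<Longrightarrow> g z \<le> h z" by auto
    show "G x \<le> h x"
    proof (cases "h x = \<infinity>")
      case True then show ?thesis by simp
    next
      case False
      have lo: "h z > -\<infinity>" if "z > 0" for z
        using g_low[OF that] hg[OF that] by (metis MInfty_neq_ereal(1) ereal_infty_less(2) order.strict_trans1 order_less_le)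
      then obtain c where c: "h x = ereal c" using False x by (cases "h x") auto
      define m where "m = U (x / integral\<^sup>L M Z)"
      have bd: "ereal m \<le> h z" if "z \<ge> x" for z
      proof -
        have "ereal m \<le> g x" unfolding m_def by (rule g_low[OF x])
        also have "\<dots> \<le> g z" using x that by (intro g_mono) auto
        also have "\<dots> \<le> h z" using x that by (intro hg) auto
        finally show ?thesis .
      qed
      obtain s where s: "s \<ge> 0" "\<And>z. z > 0 \<Longrightarrow> h z \<le> ereal (c + s * (z - x))"
        using support_line[OF hc[unfolded concave_ereal_on_def] x c lo bd] by blast
      show ?thesis unfolding c
      proof (rule ereal_le_epsilon2)
        fix e :: real assume e: "0 < e"
        define y where "y = s + e / x"
        have y: "y > 0" using s x e by (simp add: y_def add_nonneg_pos)
        have "(SUP z\<in>{0<..}. g z - ereal (z * y)) \<le> ereal (c - s * x)"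
        proof (rule SUP_least)
          fix z :: real assume z: "z \<in> {0<..}"
          have "g z \<le> ereal (c + s * (z - x))" using hg[of z] s(2)[of z] z by (auto intro: order_trans)
          then have "g z - ereal (z * y) \<le> ereal (c + s * (z - x) - z * y)"
            by (cases "g z") auto
          also have "c + s * (z - x) - z * y \<le> c - s * x"
          proof -
            have "z * y \<ge> z * s" using z x e by (simp add: y_def)
            then show ?thesis by (simp add: algebra_simps)
          qed
          finally show "g z - ereal (z * y) \<le> ereal (c - s * x)" by simp
        qed
        then have "ereal (vv y) \<le> ereal (c - s * x)" unfolding part1[OF y, symmetric] .
        then have vy: "vv y \<le> c - s * x" by simp
        have "G x \<le> ereal (vv y + x * y)" using G_upper[OF _ y] x by simp
        also have "vv y + x * y \<le> c + e"
        proof -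
          have "x * y = s * x + e" using x by (simp add: y_def algebra_simps)
          then show ?thesis using vy by simp
        qed
        finally show "G x \<le> ereal c + ereal e" by simp
      qed
    qed
  qed
  show "concave_envelope_on {0<..} g x \<le> G x"
    unfolding concave_envelope_on_def
    by (rule INF_lower2[of G]) (use G_conc g_le_G in auto)
qed

end

theorem theorem4p1:
  fixes M :: "'a measure" and T :: real and F :: "real \<Rightarrow> 'a measure"
    and lam :: real and S Z0 Z1 :: "real \<Rightarrow> 'a \<Rightarrow> real" and U :: "real \<Rightarrow> real"
  assumes "prob_space M" and "complete_measure M" and "T > 0"
    and "filtration M T F" and "usual_conditions M T F"
    and "0 < lam" and "lam < 1"
    and "adapted T F S" and "cadlag M T S" and "\<forall>t\<in>{0..T}. \<forall>\<omega>\<in>space M. S t \<omega> > 0"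
    and "consistent_price_system M T F lam S Z0 Z1"
    and "utility U"
    and "\<forall>y>0. ereal_expectation M (\<lambda>\<omega>. conj_V U (y * Z0 T \<omega>)) < \<infinity>"
  shows "(\<forall>y>0. ereal_expectation M (\<lambda>\<omega>. conj_V U (y * Z0 T \<omega>))
               = (SUP x \<in> {0<..}. value_fun M (Z0 T) (U_ext U) x - ereal (x * y))) \<and>
         (\<forall>x>0. value_fun M (Z0 T) (U_c U) x
               = concave_envelope_on {0<..} (value_fun M (Z0 T) (U_ext U)) x)"
  proof -
  have T: "T \<in> {0..T}" using assms(3) by simp
  have c: "(\<forall>t\<in>{0..T}. \<forall>\<omega>\<in>space M. Z0 t \<omega> > 0 \<and> Z1 t \<omega> > 0) \<and>
     (\<forall>\<omega>\<in>space M. Z0 0 \<omega> = 1) \<and>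
     martingale M T F Z0 \<and> local_martingale M T F Z1 \<and>
     (\<forall>t\<in>{0..T}. AE \<omega> in M. Z1 t \<omega> / Z0 t \<omega> \<in> {(1 - lam) * S t \<omega> .. S t \<omega>})"
    using assms(11) unfolding consistent_price_system_def .
  have mart: "martingale M T F Z0" using c by (elim conjE)
  have Zpos: "\<And>\<omega>. \<omega> \<in> space M \<Longrightarrow> Z0 T \<omega> > 0"
  proof -
    fix \<omega> assume w: "\<omega> \<in> space M"
    have "\<forall>t\<in>{0..T}. \<forall>\<omega>\<in>space M. Z0 t \<omega> > 0 \<and> Z1 t \<omega> > 0" using c by (elim conjE)
    then have "Z0 T \<omega> > 0 \<and> Z1 T \<omega> > 0" using T w by blast
    then show "Z0 T \<omega> > 0" ..
  qed
  have m: "adapted T F Z0 \<and> (\<forall>t\<in>{0..T}. integrable M (Z0 t)) \<and>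
     (\<forall>s\<in>{0..T}. \<forall>t\<in>{0..T}. s \<le> t \<longrightarrow>
        (AE \<omega> in M. real_cond_exp M (F s) (Z0 t) \<omega> = Z0 s \<omega>))"
    using mart unfolding martingale_def .
  have "\<forall>t\<in>{0..T}. integrable M (Z0 t)" using m by (elim conjE)
  then have Zi: "integrable M (Z0 T)" using T by blast
  have "adapted T F Z0" using m by (elim conjE)
  then have ZF: "Z0 T \<in> borel_measurable (F T)" using T unfolding adapted_def by blast
  have "\<forall>t\<in>{0..T}. subalgebra M (F t)" using assms(4) unfolding filtration_def by (elim conjE)
  then have "subalgebra M (F T)" using T by blast
  then have Zm: "Z0 T \<in> borel_measurable M" using ZF by (rule measurable_from_subalg)
  have fin: "\<And>y. y > 0 \<Longrightarrow> ereal_expectation M (\<lambda>\<omega>. conj_V U (y * Z0 T \<omega>)) < \<infinity>"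
    using assms(13) by blast
  interpret setting M "Z0 T" U
    by (rule setting.intro[OF assms(1) Zm Zpos Zi assms(12) fin])
  show ?thesis
  proof (intro conjI allI impI)
    fix y :: real assume y: "y > 0"
    show "ereal_expectation M (\<lambda>\<omega>. conj_V U (y * Z0 T \<omega>))
               = (SUP x \<in> {0<..}. value_fun M (Z0 T) (U_ext U) x - ereal (x * y))"
      using V_int(2)[OF y] part1[OF y] by simp
  next
    fix x :: real assume x: "x > 0"
    show "value_fun M (Z0 T) (U_c U) x
               = concave_envelope_on {0<..} (value_fun M (Z0 T) (U_ext U)) x"
      by (rule part2[OF x])
  qed
qed

end
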